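(* Let $\alpha,\beta\in\mathbb{R}$ with $\alpha\ne0$, let $\{c_k\}_{k\ge0}$ be a sequence of nonzero real numbers, and set $q_k(x)=c_k(\alpha x+\beta)^k$. Let $\{\gamma_n\}_{n\ge0}$ be real numbers and let $T:\mathbb{R}[x]\to\mathbb{R}[x]$ be the linear operator with $T[q_n]=\gamma_nq_n$ for all $n\ge0$. Writing $T=\sum_{k\ge0}Q_k(x)D^k$, we have $Q_0=\gamma_0$ and for every $k\ge1$ \[Q_k(x)=\frac{(-1)^k(\alpha x+\beta)^k}{k!\,\alpha^k}\Big(\gamma_0-\sum_{j=1}^k\binom{k}{j}(-1)^{j+1}\gamma_j\Big).\] Consequently each $Q_k$ is either identically zero or of degree exactly $k$, and $T$ is monotone.
   Context: $D=\frac{d}{dx}$. Every linear operator $T:\mathbb{R}[x]\to\mathbb{R}[x]$ can be written uniquely as $T=\sum_{k=0}^\infty Q_k(x)D^k$ with $Q_k\in\mathbb{R}[x]$ (meaning $T[p]=\sum_kQ_kD^k[p]$ for all polynomials $p$). $T$ is monotone if $\deg Q_k\le\deg Q_l$ whenever $k<l$ and $Q_k\not\equiv0$, $Q_l\not\equiv0$. *)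

theory Defs
  imports "HOL-Computational_Algebra.Polynomial"
begin

definition lin_op :: "(real poly \<Rightarrow> real poly) \<Rightarrow> bool" where
  "lin_op T \<longleftrightarrow> (\<forall>p q. T (p + q) = T p + T q) \<and> (\<forall>c p. T (smult c p) = smult c (T p))"

text \<open>T = sum_k Q_k D^k, i.e. T[p] = sum_k Q_k D^k[p] for all p (the sum is finite,
  since D^k p = 0 for k > degree p).\<close>
definition diff_op_rep :: "(real poly \<Rightarrow> real poly) \<Rightarrow> (nat \<Rightarrow> real poly) \<Rightarrow> bool" where
  "diff_op_rep T Q \<longleftrightarrow> (\<forall>p. T p = (\<Sum>k\<le>degree p. Q k * (pderiv ^^ k) p))"

definition monotone_op :: "(real poly \<Rightarrow> real poly) \<Rightarrow> bool" where
  "monotone_op T \<longleftrightarrow> (\<exists>Q. diff_op_rep T Q \<and>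
     (\<forall>k l. k < l \<and> Q k \<noteq> 0 \<and> Q l \<noteq> 0 \<longrightarrow> degree (Q k) \<le> degree (Q l)))"

end

theory Submission imports Defs begin

lemma swap_tri: fixes n :: nat shows "(\<Sum>k\<le>n. \<Sum>j\<le>k. f k j) = (\<Sum>j\<le>n. \<Sum>k\<in>{j..n}. f k j)"
proof (induction n)
  case 0 then show ?case by simp
next
  case (Suc n)
  have "(\<Sum>j\<le>Suc n. \<Sum>k\<in>{j..Suc n}. f k j) = (\<Sum>j\<le>n. \<Sum>k\<in>{j..Suc n}. f k j) + f (Suc n) (Suc n)"
    by simp
  also have "(\<Sum>j\<le>n. \<Sum>k\<in>{j..Suc n}. f k j) = (\<Sum>j\<le>n. (\<Sum>k\<in>{j..n}. f k j) + f (Suc n) j)"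
    by (intro sum.cong refl) (simp add: add.commute)
  finally show ?case using Suc by (simp add: sum.distrib)
qed

lemma alt_inner:
  assumes "j \<le> n"
  shows "(\<Sum>k\<in>{j..n}. (-1::real)^(k+j) * real (n choose k) * real (k choose j)) = (if j = n then 1 else 0)"
proof -
  have "(\<Sum>k\<in>{j..n}. (-1::real)^(k+j) * real (n choose k) * real (k choose j))
      = (\<Sum>k\<in>{j..n}. real (n choose j) * ((-1::real)^(k-j) * real ((n-j) choose (k-j))))"
  proof (intro sum.cong refl)
    fix k assume k: "k \<in> {j..n}"
    have "(-1::real)^(k+j) = (-1)^(k-j)"
    proof -
      obtain d where "k = j + d" using k by (metis atLeastAtMost_iff le_Suc_ex)
      then show ?thesis by (simp add: power_add power_mult_distrib)
    qed
    moreover have "real (n choose k) * real (k choose j) = real (n choose j) * real ((n-j) choose (k-j))"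
      using choose_mult[of j k n] k by (metis atLeastAtMost_iff of_nat_mult)
    ultimately show "(-1::real)^(k+j) * real (n choose k) * real (k choose j) = real (n choose j) * ((-1::real)^(k-j) * real ((n-j) choose (k-j)))"
      by simp
  qed
  also have "\<dots> = real (n choose j) * (\<Sum>k\<in>{j..n}. (-1::real)^(k-j) * real ((n-j) choose (k-j)))"
    by (simp add: sum_distrib_left)
  also have "(\<Sum>k\<in>{j..n}. (-1::real)^(k-j) * real ((n-j) choose (k-j))) = (\<Sum>i\<le>n-j. (-1::real)^i * real ((n-j) choose i))"
  proof -
    have "{j..n} = {0+j..(n-j)+j}" using assms by simp
    then have "(\<Sum>k\<in>{j..n}. (-1::real)^(k-j) * real ((n-j) choose (k-j))) = (\<Sum>i\<in>{0..n-j}. (-1::real)^i * real ((n-j) choose i))"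
      by (simp only: sum.shift_bounds_cl_nat_ivl) simp
    then show ?thesis by (simp add: atLeast0AtMost)
  qed
  also have "\<dots> = (if j = n then 1 else 0)"
    using choose_alternating_sum[of "n-j", where 'a=real] assms by auto
  finally show ?thesis using assms by auto
qed

lemma binom_inv:
  fixes g :: "nat \<Rightarrow> real"
  shows "(\<Sum>k\<le>n. real (n choose k) * (\<Sum>j\<le>k. (-1)^(k+j) * real (k choose j) * g j)) = g n"
proof -
  have "(\<Sum>k\<le>n. real (n choose k) * (\<Sum>j\<le>k. (-1)^(k+j) * real (k choose j) * g j))
     = (\<Sum>k\<le>n. \<Sum>j\<le>k. ((-1::real)^(k+j) * real (n choose k) * real (k choose j)) * g j)"
    by (simp add: sum_distrib_left mult_ac)
  also have "\<dots> = (\<Sum>j\<le>n. \<Sum>k\<in>{j..n}. ((-1::real)^(k+j) * real (n choose k) * real (k choose j)) * g j)"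
    by (rule swap_tri)
  also have "\<dots> = (\<Sum>j\<le>n. (if j = n then g j else 0))"
    by (intro sum.cong refl) (simp add: sum_distrib_right[symmetric] alt_inner)
  also have "\<dots> = g n" by simp
  finally show ?thesis .
qed



lemma deriv_pow:
  fixes a b :: real
  shows "k \<le> n \<Longrightarrow> (pderiv ^^ k) ([:b, a:] ^ n) = smult (fact n / fact (n - k) * a ^ k) ([:b, a:] ^ (n - k))"
proof (induction k)
  case 0 then show ?case by simp
next
  case (Suc k)
  then have IH: "(pderiv ^^ k) ([:b, a:] ^ n) = smult (fact n / fact (n - k) * a ^ k) ([:b, a:] ^ (n - k))" by simp
  obtain m where m: "n - k = Suc m" using Suc.prems by (metis Suc_diff_le diff_Suc_Suc le_SucE less_eq_Suc_le Suc_le_lessD zero_less_diff not0_implies_Suc)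
  have nm: "n - Suc k = m" using m by simp
  have "(pderiv ^^ Suc k) ([:b, a:] ^ n) = pderiv (smult (fact n / fact (n - k) * a ^ k) ([:b, a:] ^ (n - k)))"
    using IH by simp
  also have "\<dots> = smult (fact n / fact (n - k) * a ^ k * of_nat (Suc m) * a) ([:b, a:] ^ m)"
  proof -
    have d: "pderiv ([:b, a:] ^ Suc m) = smult (of_nat (Suc m) * a) ([:b, a:] ^ m)"
      unfolding pderiv_power_Suc by (simp add: pderiv_pCons mult.commute)
    show ?thesis unfolding m pderiv_smult d by (simp add: mult_ac)
  qed
  also have "fact n / fact (n - k) * a ^ k * of_nat (Suc m) * a = fact n / fact (n - Suc k) * a ^ Suc k"
  proof -
    have f: "fact (Suc m) = (of_nat (Suc m) * fact m :: real)" by simp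
    have "(fact m :: real) > 0" "real (Suc m) > 0" by auto
    then show ?thesis unfolding m nm f by (simp add: field_simps del: of_nat_Suc)
  qed
  finally show ?case by (simp add: nm)
qed


theorem mainTheorem7:
  fixes \<alpha> \<beta> :: real and c \<gamma> :: "nat \<Rightarrow> real"
    and T :: "real poly \<Rightarrow> real poly" and Q :: "nat \<Rightarrow> real poly"
  assumes "\<alpha> \<noteq> 0"
    and "\<forall>k. c k \<noteq> 0"
    and "lin_op T"
    and "\<forall>n. T (smult (c n) ([:\<beta>, \<alpha>:] ^ n)) = smult (\<gamma> n) (smult (c n) ([:\<beta>, \<alpha>:] ^ n))"
    and "diff_op_rep T Q"
  shows "Q 0 = [:\<gamma> 0:]
    \<and> (\<forall>k\<ge>1. Q k = smult ((-1) ^ k / (fact k * \<alpha> ^ k)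
          * (\<gamma> 0 - (\<Sum>j=1..k. real (k choose j) * (-1) ^ (j + 1) * \<gamma> j)))
          ([:\<beta>, \<alpha>:] ^ k))
    \<and> (\<forall>k. Q k = 0 \<or> degree (Q k) = k)
    \<and> monotone_op T"
proof -
  define u where "u = [:\<beta>, \<alpha>:]"
  define b where "b k = (\<Sum>j\<le>k. (-1)^(k+j) * real (k choose j) * \<gamma> j)" for k
  have u0: "u \<noteq> 0" using assms(1) by (simp add: u_def)
  have degu: "degree (u ^ n) = n" for n
    using degree_power_eq[OF u0, of n] assms(1) by (simp add: u_def)
  have Tu: "T (u ^ n) = smult (\<gamma> n) (u ^ n)" for n
  proof -
    have "smult (c n) (T (u ^ n)) = smult (c n) (smult (\<gamma> n) (u ^ n))"
      using assms(3,4) unfolding lin_op_def u_def by (metis smult_smult mult.commute)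
    then have "smult (1 / c n) (smult (c n) (T (u ^ n))) = smult (1 / c n) (smult (c n) (smult (\<gamma> n) (u ^ n)))"
      by simp
    then show ?thesis using assms(2) by (simp only: smult_smult) simp
  qed
  have QA: "Q n = smult (b n / (fact n * \<alpha> ^ n)) (u ^ n)" for n
  proof (induction n rule: less_induct)
    case (less n)
    have "smult (\<gamma> n) (u ^ n) = (\<Sum>k\<le>n. Q k * (pderiv ^^ k) (u ^ n))"
      using assms(5) Tu[of n] degu[of n] unfolding diff_op_rep_def by metis
    also have "\<dots> = (\<Sum>k<n. Q k * (pderiv ^^ k) (u ^ n)) + Q n * (pderiv ^^ n) (u ^ n)"
      by (simp add: lessThan_Suc_atMost[symmetric])
    also have "(\<Sum>k<n. Q k * (pderiv ^^ k) (u ^ n)) = (\<Sum>k<n. smult (real (n choose k) * b k) (u ^ n))"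
    proof (intro sum.cong refl)
      fix k assume k: "k \<in> {..<n}"
      then have kn: "k \<le> n" by simp
      have "Q k * (pderiv ^^ k) (u ^ n) = smult (b k / (fact k * \<alpha> ^ k)) (u ^ k) * smult (fact n / fact (n - k) * \<alpha> ^ k) (u ^ (n - k))"
        using less.IH[of k] k deriv_pow[OF kn, of \<beta> \<alpha>] by (simp add: u_def)
      also have "\<dots> = smult (b k / (fact k * \<alpha> ^ k) * (fact n / fact (n - k) * \<alpha> ^ k)) (u ^ k * u ^ (n - k))"
        by (simp add: mult_ac)
      also have "u ^ k * u ^ (n - k) = u ^ n" using kn by (simp add: power_add[symmetric])
      also have "b k / (fact k * \<alpha> ^ k) * (fact n / fact (n - k) * \<alpha> ^ k) = real (n choose k) * b k"
        using binomial_fact[OF kn, where 'a=real] assms(1) by (simp add: field_simps)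
      finally show "Q k * (pderiv ^^ k) (u ^ n) = smult (real (n choose k) * b k) (u ^ n)" .
    qed
    also have "\<dots> = smult (\<Sum>k<n. real (n choose k) * b k) (u ^ n)"
      by (simp add: smult_sum)
    also have "Q n * (pderiv ^^ n) (u ^ n) = smult (fact n * \<alpha> ^ n) (Q n)"
      using deriv_pow[of n n \<beta> \<alpha>] by (simp add: u_def)
    finally have eq: "smult (\<gamma> n) (u ^ n) = smult (\<Sum>k<n. real (n choose k) * b k) (u ^ n) + smult (fact n * \<alpha> ^ n) (Q n)" .
    have g: "\<gamma> n = (\<Sum>k<n. real (n choose k) * b k) + b n"
      using binom_inv[of n \<gamma>] by (simp add: b_def lessThan_Suc_atMost[symmetric])
    have "smult (fact n * \<alpha> ^ n) (Q n) = smult (b n) (u ^ n)"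
      using eq unfolding g by (simp add: smult_add_left)
    then have "smult (1 / (fact n * \<alpha> ^ n)) (smult (fact n * \<alpha> ^ n) (Q n)) = smult (1 / (fact n * \<alpha> ^ n)) (smult (b n) (u ^ n))"
      by simp
    then show ?case using assms(1) by (simp only: smult_smult) simp
  qed
  have Q0: "Q 0 = [:\<gamma> 0:]" using QA[of 0] by (simp add: b_def)
  have Qk: "Q k = smult ((-1) ^ k / (fact k * \<alpha> ^ k)
          * (\<gamma> 0 - (\<Sum>j=1..k. real (k choose j) * (-1) ^ (j + 1) * \<gamma> j)))
          ([:\<beta>, \<alpha>:] ^ k)" for k
  proof -
    have "b k = (-1)^k * \<gamma> 0 + (\<Sum>j=1..k. (-1)^(k+j) * real (k choose j) * \<gamma> j)"
      unfolding b_def by (simp add: atMost_atLeast0 sum.atLeast_Suc_atMost)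
    also have "\<dots> = (-1) ^ k * (\<gamma> 0 - (\<Sum>j=1..k. real (k choose j) * (-1) ^ (j + 1) * \<gamma> j))"
      by (simp add: algebra_simps sum_distrib_left power_add sum_negf)
    finally show ?thesis using QA[of k] by (simp add: u_def)
  qed
  have deg: "Q k = 0 \<or> degree (Q k) = k" for k
    using QA[of k] degu[of k] by auto
  have mono: "monotone_op T"
    unfolding monotone_op_def using assms(5) deg by (metis less_imp_le)
  show ?thesis using Q0 Qk deg mono by blast
qed

end
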